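(* Let $G\subseteq W(\mathsf D_n)$ be a group satisfying the (H1), relative minimality and minimality conditions, let $O$ be an orbit of $pr(G)$ on $\{1,\dots,n\}$ of size $n'$, with indices labelled so that $O=\{1,\dots,n'\}$. For $g\in G$ let $g_O$ denote the product of those signed permutation cycles of $g$ whose underlying cycles lie in $O$, and define $P_O(g)=g_Oc_{n'+1}$ if $\sigma(g_O)=-1$ and $P_O(g)=g_O$ if $\sigma(g_O)=1$. Then $\overline G_O=\{P_O(g): g\in G\}$ is a group and $P_O:G\to\overline G_O$ is a group homomorphism.
   Context: $W(\mathsf B_m)$ is the group of signed permutations of the symbols $j^\pm$ ($1\le j\le m$), generated by $\mathfrak S_m$ and involutions $c_j$ exchanging $j^\pm$; elements are $c_{j_1}\cdots c_{j_t}\tau$; $pr(c_{j_1}\cdots c_{j_t}\tau)=\tau$; $\sigma(c_{j_1}\cdots c_{j_t}\tau)=(-1)^t$; $W(\mathsf D_m)=\ker\sigma$. Signed permutation cycles of $g$: for each cycle $\gamma$ of $\tau$ (fixed points included), $\beta_\gamma=(\prod_{j_i\in\mathrm{supp}\,\gamma}c_{j_i})\gamma$. $W(\mathsf D_n)$ acts on $\mathrm{Pic}(\bar X)=\bigoplus_{i=-1}^n\mathbb Zl_i$ by: for $g=c_{j_1}\cdots c_{j_t}\tau$ with $s(i)=-1$ iff $i\in\{j_1,\dots,j_t\}$, $\Phi(g)l_0=l_0$, $\Phi(g)l_{-1}=l_{-1}+\frac t2l_0-\sum_{s(i)=-1}l_i$, $\Phi(g)l_v=l_u$ or $l_0-l_u$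 ($u=\tau^{-1}(v)$) according as $s(u)=1$ or $-1$. (H1): $\mathrm H^1(H,\mathrm{Pic}(\bar X))=0$ for all subgroups $H\subseteq G$. Relative minimality: $\mathrm{Pic}(\bar X)^G=\mathbb Zl_0\oplus\mathbb ZK$ with $K=-2(l_{-1}+l_0)+\sum_{i=1}^nl_i$. Minimality: $G$ corresponds to a $k$-minimal conic bundle; in particular, for each $j$, $j^+$ and $j^-$ lie in the same $G$-orbit. $\overline G_O$ is regarded inside $W(\mathsf D_{n'+1})$ (or $W(\mathsf D_{n'})$ if no $c_{n'+1}$ occurs). *)

theory Defs
  imports Main
begin

text \<open>Signed permutations of the symbols j+ and j- (1 \<le> j \<le> m) are encoded as
  odd bijections of the integers: the symbol j+ is the integer j, the symbol j- is -j.  An element c_{j1} ... c_{jt} tau of the paper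
  (product read left to right: first the c's, then tau) is the function
  f = tau o c_S with S = {j1,...,jt}; hence tau j = |f j| and S = {j > 0. f j < 0}.\<close>

definition W_B :: "nat \<Rightarrow> (int \<Rightarrow> int) set" where
  "W_B m = {f. bij f \<and> (\<forall>x. f (- x) = - f x) \<and> (\<forall>x. x \<notin> {- int m .. int m} \<longrightarrow> f x = x)}"

definition neg_set :: "(int \<Rightarrow> int) \<Rightarrow> int set" where
  "neg_set f = {j. 0 < j \<and> f j < 0}"

definition sp_sigma :: "(int \<Rightarrow> int) \<Rightarrow> int" where
  "sp_sigma f = (-1) ^ card (neg_set f)"

definition W_D :: "nat \<Rightarrow> (int \<Rightarrow> int) set" where
  "W_D m = {f \<in> W_B m. sp_sigma f = 1}"

definition pr :: "(int \<Rightarrow> int) \<Rightarrow> int \<Rightarrow> int" where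
  "pr f = (\<lambda>j. \<bar>f j\<bar>)"

definition c :: "int \<Rightarrow> int \<Rightarrow> int" where
  "c j = (\<lambda>x. if x = j then - j else if x = - j then j else x)"

definition group_of_funs :: "(int \<Rightarrow> int) set \<Rightarrow> bool" where
  "group_of_funs H \<longleftrightarrow> id \<in> H \<and> (\<forall>f\<in>H. \<forall>g\<in>H. f \<circ> g \<in> H) \<and> (\<forall>f\<in>H. inv f \<in> H)"

text \<open>Pic(X) = direct sum of Z l_i, i = -1..n, as coefficient functions.\<close>
definition Pic :: "nat \<Rightarrow> (int \<Rightarrow> int) set" where
  "Pic n = {x. \<forall>i. (i < -1 \<or> i > int n) \<longrightarrow> x i = 0}"

text \<open>The action Phi(g) on coefficient vectors, obtained by linearity from
  Phi(g) l_0 = l_0, Phi(g) l_{-1} = l_{-1} + t/2 l_0 - sum_{i in S} l_i,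
  Phi(g) l_v = l_u or l_0 - l_u with u = tau^{-1} v according as u \<notin> S or u \<in> S.\<close>
definition Phi :: "nat \<Rightarrow> (int \<Rightarrow> int) \<Rightarrow> (int \<Rightarrow> int) \<Rightarrow> (int \<Rightarrow> int)" where
  "Phi n f x = (\<lambda>i.
     if i = -1 then x (-1)
     else if i = 0 then x 0 + x (-1) * (int (card (neg_set f)) div 2)
                        + (\<Sum>u\<in>neg_set f. x \<bar>f u\<bar>)
     else if 1 \<le> i \<and> i \<le> int n then
       (if f i > 0 then x (f i) else - x (- f i) - x (-1))
     else 0)"

text \<open>(H1): H^1(H, Pic) = 0 for all subgroups H of G.  The paper's product gh
  (first g, then h) is the composition h \<circ> g; Phi is a homomorphism for it, so a
  crossed homomorphism satisfies a(gh) = a(g) + Phi(g) a(h).\<close>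
definition H1_condition :: "nat \<Rightarrow> (int \<Rightarrow> int) set \<Rightarrow> bool" where
  "H1_condition n G \<longleftrightarrow>
     (\<forall>H. H \<subseteq> G \<and> group_of_funs H \<longrightarrow>
        (\<forall>a :: (int \<Rightarrow> int) \<Rightarrow> (int \<Rightarrow> int).
           (\<forall>g\<in>H. a g \<in> Pic n) \<and>
           (\<forall>g\<in>H. \<forall>h\<in>H. a (h \<circ> g) = (\<lambda>i. a g i + Phi n g (a h) i))
           \<longrightarrow> (\<exists>m\<in>Pic n. \<forall>g\<in>H. a g = (\<lambda>i. Phi n g m i - m i))))"

definition l0 :: "int \<Rightarrow> int" where
  "l0 = (\<lambda>i. if i = 0 then 1 else 0)"

definition Kcan :: "nat \<Rightarrow> int \<Rightarrow> int" where
  "Kcan n = (\<lambda>i. if i = -1 \<or> i = 0 then -2 else if 1 \<le> i \<and> i \<le> int n then 1 else 0)"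

definition relatively_minimal :: "nat \<Rightarrow> (int \<Rightarrow> int) set \<Rightarrow> bool" where
  "relatively_minimal n G \<longleftrightarrow>
     {x \<in> Pic n. \<forall>g\<in>G. Phi n g x = x} = {(\<lambda>i. a * l0 i + b * Kcan n i) | a b. True}"

text \<open>Combinatorial consequence of k-minimality stated in the paper: for each j,
  j+ and j- lie in the same G-orbit.\<close>
definition minimality_condition :: "nat \<Rightarrow> (int \<Rightarrow> int) set \<Rightarrow> bool" where
  "minimality_condition n G \<longleftrightarrow> (\<forall>j \<in> {1 .. int n}. \<exists>g\<in>G. g j = - j)"

definition tau_cycle :: "(int \<Rightarrow> int) \<Rightarrow> int \<Rightarrow> int set" where
  "tau_cycle g j = {(pr g ^^ k) j | k. True}"

definition g_O :: "int set \<Rightarrow> (int \<Rightarrow> int) \<Rightarrow> (int \<Rightarrow> int)" where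
  "g_O Orb g = (\<lambda>x. if tau_cycle g \<bar>x\<bar> \<subseteq> Orb then g x else x)"

definition P_O :: "nat \<Rightarrow> (int \<Rightarrow> int) \<Rightarrow> (int \<Rightarrow> int)" where
  "P_O n' g = (let h = g_O {1 .. int n'} g in
                 if sp_sigma h = -1 then c (int n' + 1) \<circ> h else h)"

end

theory Submission
  imports Defs
begin

lemma odd_zero: assumes "\<forall>x. f (- x) = - f (x::int)" shows "f 0 = (0::int)"
proof -
  have "f (- 0) = - f 0" using assms by blast
  then show ?thesis by simp
qed

lemma odd_nz: fixes f :: "int \<Rightarrow> int" assumes "\<forall>x. f (- x) = - f (x::int)" "inj f" "j \<noteq> 0" shows "f j \<noteq> 0"
  using odd_zero[OF assms(1)] assms(2,3) by (metis injD)

lemma sigma_mult: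
  assumes of: "\<forall>x. f (- x) = - f x" and oh: "\<forall>x. h (- x) = - h x"
    and bf: "bij f" and bh: "bij h"
    and ff: "finite (neg_set f)" and fh: "finite (neg_set h)"
  shows "sp_sigma (f \<circ> h) = sp_sigma f * sp_sigma h"
proof -
  define A where "A = neg_set h"
  define B where "B = neg_set f"
  define T where "T = {j. 0 < j \<and> \<bar>h j\<bar> \<in> B}"
  have ih: "inj h" and jf: "inj f" using bf bh bij_is_inj by auto
  have eq: "neg_set (f \<circ> h) = (A - T) \<union> (T - A)"
  proof (rule set_eqI)
    fix j :: int
    show "j \<in> neg_set (f \<circ> h) \<longleftrightarrow> j \<in> (A - T) \<union> (T - A)"
    proof (cases "0 < j")
      case True
      then have "h j \<noteq> 0" using odd_nz[OF oh ih] by auto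
      then have "f (h j) \<noteq> 0" using odd_nz[OF of jf] by auto
      have "f (- h j) = - f (h j)" using of by blast
      then show ?thesis using True \<open>h j \<noteq> 0\<close> \<open>f (h j) \<noteq> 0\<close>
        unfolding A_def B_def T_def neg_set_def by (cases "h j > 0") auto
    next
      case False
      then show ?thesis unfolding A_def B_def T_def neg_set_def by auto
    qed
  qed
  have injT: "inj_on (\<lambda>j. \<bar>h j\<bar>) T"
  proof (rule inj_onI)
    fix x y assume x: "x \<in> T" and y: "y \<in> T" and e: "\<bar>h x\<bar> = \<bar>h y\<bar>"
    have "h (- y) = - h y" using oh by blast
    moreover have "h x = h y \<or> h x = - h y" using e by (auto simp: abs_if split: if_splits)
    ultimately have "x = y \<or> x = - y" using ih by (metis injD)
    then show "x = y" using x y unfolding T_def by auto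
  qed
  have imT: "(\<lambda>j. \<bar>h j\<bar>) ` T = B"
  proof
    show "(\<lambda>j. \<bar>h j\<bar>) ` T \<subseteq> B" unfolding T_def by auto
  next
    show "B \<subseteq> (\<lambda>j. \<bar>h j\<bar>) ` T"
    proof
      fix b assume b: "b \<in> B"
      then have bp: "0 < b" unfolding B_def neg_set_def by auto
      obtain y where y: "h y = b" using bh by (metis bij_pointE)
      have "h (- y) = - h y" using oh by blast
      have "y \<noteq> 0" using y bp odd_zero[OF oh] by auto
      show "b \<in> (\<lambda>j. \<bar>h j\<bar>) ` T"
      proof (cases "0 < y")
        case True
        then show ?thesis using y b bp unfolding T_def by (auto intro!: image_eqI[of _ _ y])
      next
        case False
        then have "0 < - y" using \<open>y \<noteq> 0\<close> by auto
        then show ?thesis using y b bp \<open>h (- y) = - h y\<close> unfolding T_def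
          by (auto intro!: image_eqI[of _ _ "- y"])
      qed
    qed
  qed
  have cT: "card T = card B" using card_image[OF injT] imT by simp
  have fT: "finite T" using finite_imageD[of "(\<lambda>j. \<bar>h j\<bar>)" T] injT imT ff B_def by simp
  have fA: "finite A" using fh A_def by simp
  have disj: "(A - T) \<inter> (T - A) = {}" by auto
  have c1: "card (A - T) + card (A \<inter> T) = card A"
    using fA card_Diff_subset_Int[of A T] by (metis Int_lower1 card_Diff_subset card_mono finite_Int le_add_diff_inverse2 Diff_Int2 inf.idem)
  have c2: "card (T - A) + card (A \<inter> T) = card T"
    using fT by (metis Int_commute Int_lower1 card_Diff_subset card_mono finite_Int le_add_diff_inverse2 Diff_Int2 inf.idem)
  have c3: "card (neg_set (f \<circ> h)) = card (A - T) + card (T - A)"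
    unfolding eq using fA fT disj by (simp add: card_Un_disjoint)
  have "card (neg_set (f \<circ> h)) + 2 * card (A \<inter> T) = card A + card B"
    using c1 c2 c3 cT by simp
  then have "(-1::int) ^ (card (neg_set (f \<circ> h)) + 2 * card (A \<inter> T)) = (-1) ^ card A * (-1) ^ card B"
    by (metis power_add)
  then show ?thesis unfolding sp_sigma_def A_def B_def by (simp add: power_add power_mult)
qed

lemma c_props:
  fixes j :: int assumes "0 < j"
  shows "\<forall>x. c j (- x) = - c j x" "c j \<circ> c j = id" "bij (c j)" "neg_set (c j) = {j}"
    "sp_sigma (c j) = -1"
proof -
  show o: "\<forall>x. c j (- x) = - c j x" unfolding c_def using assms by auto
  show cc: "c j \<circ> c j = id" unfolding c_def using assms by (auto simp: fun_eq_iff)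
  show "bij (c j)" using cc by (metis o_bij)
  show n: "neg_set (c j) = {j}" unfolding c_def neg_set_def using assms by auto
  show "sp_sigma (c j) = -1" unfolding sp_sigma_def n by simp
qed

lemma sigma_pm: "sp_sigma f = 1 \<or> sp_sigma f = -1"
  unfolding sp_sigma_def by (metis neg_one_even_power neg_one_odd_power)

theorem lemma6p1:
  fixes n n' :: nat and G :: "(int \<Rightarrow> int) set"
  assumes "G \<subseteq> W_D n" and "group_of_funs G"
    and "H1_condition n G" and "relatively_minimal n G" and "minimality_condition n G"
    and "n' \<ge> 1" and "{pr g 1 | g. g \<in> G} = {1 .. int n'}"
  shows "group_of_funs (P_O n' ` G) \<and> P_O n' ` G \<subseteq> W_D (Suc n')
         \<and> (\<forall>g\<in>G. \<forall>h\<in>G. P_O n' (g \<circ> h) = P_O n' g \<circ> P_O n' h)"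
proof -
  define N where "N = int n'"
  define Orb where "Orb = {1 .. N}"
  define r where "r = (\<lambda>g x. if \<bar>x\<bar> \<in> Orb then g x else (x::int))"
  define P where "P = (\<lambda>g. if sp_sigma (r g) = -1 then c (N + 1) \<circ> r g else r g)"
  have Nn: "N + 1 > 0" using N_def by simp
  have WB: "bij g \<and> (\<forall>x. g (- x) = - g x) \<and> (\<forall>x. x \<notin> {- int n .. int n} \<longrightarrow> g x = x)"
    if "g \<in> G" for g using assms(1) that unfolding W_D_def W_B_def by auto
  have comp: "g \<circ> h \<in> G" if "g \<in> G" "h \<in> G" for g h
    using assms(2) that unfolding group_of_funs_def by auto
  have invG: "inv g \<in> G" if "g \<in> G" for g
    using assms(2) that unfolding group_of_funs_def by auto
  have idG: "id \<in> G" using assms(2) unfolding group_of_funs_def by auto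
  have invO: "\<bar>g x\<bar> \<in> Orb" if g: "g \<in> G" and x: "\<bar>x\<bar> \<in> Orb" for g x
  proof -
    have "\<bar>x\<bar> \<in> {pr g 1 | g. g \<in> G}" using x assms(7) unfolding Orb_def N_def by simp
    then obtain k where k: "k \<in> G" "pr k 1 = \<bar>x\<bar>" by auto
    have "\<bar>k 1\<bar> = \<bar>x\<bar>" using k(2) unfolding pr_def by simp
    then have "x = k 1 \<or> x = - k 1" by arith
    moreover have "g (- k 1) = - g (k 1)" using WB[OF g] by simp
    ultimately have "\<bar>g x\<bar> = pr (g \<circ> k) 1" unfolding pr_def by auto
    moreover have "pr (g \<circ> k) 1 \<in> Orb" using comp[OF g k(1)] assms(7) unfolding Orb_def N_def by blast
    ultimately show ?thesis by simp
  qed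
  have gO: "g_O {1 .. int n'} g = r g" if g: "g \<in> G" for g
  proof -
    have "tau_cycle g \<bar>x\<bar> \<subseteq> Orb \<longleftrightarrow> \<bar>x\<bar> \<in> Orb" for x
    proof
      assume "tau_cycle g \<bar>x\<bar> \<subseteq> Orb"
      moreover have "\<bar>x\<bar> \<in> tau_cycle g \<bar>x\<bar>" unfolding tau_cycle_def
        by (auto intro!: exI[of _ 0])
      ultimately show "\<bar>x\<bar> \<in> Orb" by blast
    next
      assume x: "\<bar>x\<bar> \<in> Orb"
      have "(pr g ^^ k) \<bar>x\<bar> \<in> Orb" for k
      proof (induction k)
        case 0 then show ?case using x by simp
      next
        case (Suc k)
        then have "\<bar>(pr g ^^ k) \<bar>x\<bar>\<bar> \<in> Orb" unfolding Orb_def by auto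
        then show ?case using invO[OF g] unfolding pr_def by simp
      qed
      then show "tau_cycle g \<bar>x\<bar> \<subseteq> Orb" unfolding tau_cycle_def by auto
    qed
    then show ?thesis unfolding g_O_def r_def Orb_def N_def by auto
  qed
  have PO: "P_O n' g = P g" if "g \<in> G" for g
    unfolding P_O_def P_def Let_def gO[OF that] N_def by simp
  have rhom: "r (g \<circ> h) = r g \<circ> r h" if g: "g \<in> G" and h: "h \<in> G" for g h
  proof
    fix x show "r (g \<circ> h) x = (r g \<circ> r h) x"
      using invO[OF h, of x] unfolding r_def by auto
  qed
  have rid: "r id = id" unfolding r_def by auto
  have rodd: "\<forall>x. r g (- x) = - r g x" if "g \<in> G" for g
    using WB[OF that] unfolding r_def by auto
  have rbij: "bij (r g)" if g: "g \<in> G" for g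
  proof -
    have a: "g \<circ> inv g = id" "inv g \<circ> g = id" using WB[OF g]
      by (meson bij_is_inj bij_is_surj inv_o_cancel surj_iff)+
    have "r g \<circ> r (inv g) = id" "r (inv g) \<circ> r g = id"
      using rhom[OF g invG[OF g]] rhom[OF invG[OF g] g] a rid by auto
    then show ?thesis by (metis o_bij)
  qed
  have rfin: "finite (neg_set (r g))" for g
  proof -
    have "neg_set (r g) \<subseteq> Orb" unfolding neg_set_def r_def Orb_def by (auto split: if_splits)
    then show ?thesis unfolding Orb_def by (meson finite_atLeastAtMost_int finite_subset)
  qed
  have rsig: "sp_sigma (r (g \<circ> h)) = sp_sigma (r g) * sp_sigma (r h)" if "g \<in> G" "h \<in> G" for g h
    using rhom[OF that] sigma_mult[OF rodd[OF that(1)] rodd[OF that(2)] rbij[OF that(1)] rbij[OF that(2)] rfin rfin]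
    by simp
  have ccomm: "c (N + 1) \<circ> r g = r g \<circ> c (N + 1)" if g: "g \<in> G" for g
  proof
    fix x
    show "(c (N + 1) \<circ> r g) x = (r g \<circ> c (N + 1)) x"
      using invO[OF g, of x] Nn unfolding r_def c_def Orb_def by auto
  qed
  note cp = c_props[OF Nn]
  have hom: "P (g \<circ> h) = P g \<circ> P h" if g: "g \<in> G" and h: "h \<in> G" for g h
  proof -
    have cc: "c (N + 1) \<circ> (c (N + 1) \<circ> f) = f" for f using cp(2) by (simp add: o_assoc)
    have e1: "c (N + 1) \<circ> r g \<circ> (c (N + 1) \<circ> r h) = r g \<circ> r h"
      using ccomm[OF g] cc by (metis o_assoc)
    have e2: "c (N + 1) \<circ> r g \<circ> r h = c (N + 1) \<circ> (r g \<circ> r h)" by (simp add: o_assoc)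
    have e3: "r g \<circ> (c (N + 1) \<circ> r h) = c (N + 1) \<circ> (r g \<circ> r h)"
      using ccomm[OF g] by (metis o_assoc)
    show ?thesis using rsig[OF g h] rhom[OF g h] sigma_pm[of "r g"] sigma_pm[of "r h"] e1 e2 e3
      unfolding P_def by auto
  qed
  have PW: "P g \<in> W_D (Suc n')" if g: "g \<in> G" for g
  proof -
    have sup: "r g x = x" if "x \<notin> {- int (Suc n') .. int (Suc n')}" for x
      using that unfolding r_def Orb_def N_def by auto
    have csup: "c (N + 1) x = x" if "x \<notin> {- int (Suc n') .. int (Suc n')}" for x
      using that unfolding c_def N_def by auto
    show ?thesis
    proof (cases "sp_sigma (r g) = -1")
      case True
      have "sp_sigma (c (N + 1) \<circ> r g) = 1"
        using sigma_mult[OF cp(1) rodd[OF g] cp(3) rbij[OF g]] cp(4,5) rfin True by simp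
      moreover have "bij (c (N + 1) \<circ> r g)" using cp(3) rbij[OF g] by (simp add: bij_comp)
      moreover have "\<forall>x. (c (N + 1) \<circ> r g) (- x) = - (c (N + 1) \<circ> r g) x"
        using cp(1) rodd[OF g] by simp
      ultimately show ?thesis using True sup csup unfolding P_def W_D_def W_B_def by auto
    next
      case False
      then have "sp_sigma (r g) = 1" using sigma_pm by metis
      then show ?thesis using False sup rbij[OF g] rodd[OF g] unfolding P_def W_D_def W_B_def by auto
    qed
  qed
  have PG: "P_O n' ` G = P ` G" using PO by auto
  have Pid: "P id = id"
  proof -
    have "neg_set id = {}" unfolding neg_set_def by auto
    then have "sp_sigma id = 1" unfolding sp_sigma_def by simp
    then show ?thesis unfolding P_def rid by simp
  qed
  have grp: "group_of_funs (P ` G)"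
    unfolding group_of_funs_def
  proof (intro conjI ballI)
    show "id \<in> P ` G" using Pid idG by (metis image_eqI)
  next
    fix f1 f2 assume "f1 \<in> P ` G" "f2 \<in> P ` G"
    then obtain g h where "g \<in> G" "h \<in> G" "f1 = P g" "f2 = P h" by blast
    then show "f1 \<circ> f2 \<in> P ` G" using hom comp by (metis image_eqI)
  next
    fix f assume "f \<in> P ` G"
    then obtain g where g: "g \<in> G" "f = P g" by blast
    have a: "g \<circ> inv g = id" "inv g \<circ> g = id" using WB[OF g(1)]
      by (meson bij_is_inj bij_is_surj inv_o_cancel surj_iff)+
    have "P g \<circ> P (inv g) = id" "P (inv g) \<circ> P g = id"
      using hom[OF g(1) invG[OF g(1)]] hom[OF invG[OF g(1)] g(1)] a Pid by auto
    then have "inv (P g) = P (inv g)" by (rule inv_unique_comp)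
    then show "inv f \<in> P ` G" using g invG by auto
  qed
  show ?thesis using grp PW hom PO comp unfolding PG by auto
qed

end
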